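(* Let $a,b$ be positive integers and $c$ an integer with $-b<c<a$, such that $\gcd(a,b,c)=1$ and each of $\gcd(a,b)$, $\gcd(a,c)$, $\gcd(b,c)$ differs from $1$. Let $d=\gcd(a,b)$ and $k\in\mathbb{N}\cup\{\infty\}$ with $k\ge d-1$. If $(a,b)$ is of case $(1')$, $(2')$ or $(3')$, then the $\mathbb{Z}$-grading $E_{(-b,c,a)}^{(\infty,k,\infty)}$ is $d$-central.
   Context: $E$ is the Grassmann algebra (over a field of characteristic zero) of an infinite-dimensional vector space with basis $e_1,e_2,\dots$; its basis consists of $1$ and the monomials $e_{i_1}\cdots e_{i_k}$, $i_1<\dots<i_k$, of length $k$ and support $\{e_{i_1},\dots,e_{i_k}\}$. For pairwise distinct integers $r_j$ and $v_j\in\mathbb{N}\cup\{\infty\}$, $E_{(r_1,\dots,r_n)}^{(v_1,\dots,v_n)}=\bigoplus_rA_r$ is the $\mathbb{Z}$-grading obtained by splitting $\{e_i\}$ into $n$ disjoint sets of cardinalities $v_1,\dots,v_n$, giving elements of the $j$-th set degree $r_j$, monomials the sum of degrees. It is $d$-central if each $e_i$ is homogeneous, $A_r\neq0$ for all $r\in\mathbb{Z}$, and for each $h\in d\mathbb{Z}$, $A_h$ contains infinitely many monomials of even length with pairwise disjoint supports. Cases: for positive $a,b$ with $d=\gcd(a,b)$ there exist $\alpha,\beta,\alpha',\beta'\in\mathbb{N}_0$ with $d=\alpha a-\beta b$ and $-d=\alpha'a-\beta'b$; choose $(\alpha,\beta)$ with $\alpha+\beta$ least possible and $(\alpha',\beta')$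 with $\alpha'+\beta'$ least possible. Case $(1')$: $\alpha+\beta$ and $\alpha'+\beta'$ both even; $(2')$: $\alpha+\beta$ even, $\alpha'+\beta'$ odd; $(3')$: $\alpha+\beta$ odd, $\alpha'+\beta'$ even; $(4')$: both odd. *)

theory Defs
  imports Main "HOL-Library.Extended_Nat"
begin

text \<open>Generators e_1, e_2, ... of the Grassmann algebra are indexed by natural numbers.
  A monomial e_{i_1}...e_{i_k} (i_1 < ... < i_k) is identified with its support, a finite
  set of indices; its length is the cardinality of the support.  A grading in which every
  generator is homogeneous is given by a weight function w assigning each generator its
  degree; a monomial then has degree the sum of the degrees of its generators.\<close>

definition mono_deg :: "(nat \<Rightarrow> int) \<Rightarrow> nat set \<Rightarrow> int" where
  "mono_deg w S = (\<Sum>i\<in>S. w i)"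

definition ecard :: "'a set \<Rightarrow> enat" where
  "ecard A = (if finite A then enat (card A) else \<infinity>)"

text \<open>w realises the grading E_{(r_1,...,r_n)}^{(v_1,...,v_n)}: the generators are split
  into n disjoint sets of cardinalities v_1,...,v_n, those of the j-th set having degree r_j
  (the r_j pairwise distinct).\<close>
definition is_grading :: "(nat \<Rightarrow> int) \<Rightarrow> int list \<Rightarrow> enat list \<Rightarrow> bool" where
  "is_grading w rs vs \<longleftrightarrow> length rs = length vs \<and> distinct rs \<and>
     (\<forall>i. w i \<in> set rs) \<and>
     (\<forall>j<length rs. ecard {i. w i = rs ! j} = vs ! j)"

text \<open>A_r \<noteq> 0 iff some monomial (including 1 = empty support) has degree r,
  since A_r is spanned by the monomials of degree r.\<close>
definition d_central :: "(nat \<Rightarrow> int) \<Rightarrow> int \<Rightarrow> bool" where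
  "d_central w d \<longleftrightarrow>
     (\<forall>r::int. \<exists>S. finite S \<and> mono_deg w S = r) \<and>
     (\<forall>h::int. d dvd h \<longrightarrow>
        (\<exists>F::nat set set. infinite F \<and> pairwise disjnt F \<and>
           (\<forall>S\<in>F. finite S \<and> even (card S) \<and> mono_deg w S = h)))"

definition min_rep :: "int \<Rightarrow> int \<Rightarrow> int \<Rightarrow> nat" where
  "min_rep a b s = (LEAST n. \<exists>\<alpha> \<beta>::nat. int \<alpha> * a - int \<beta> * b = s \<and> \<alpha> + \<beta> = n)"

definition case_of :: "int \<Rightarrow> int \<Rightarrow> nat" where
  "case_of a b = (let m = min_rep a b (gcd a b); m' = min_rep a b (- gcd a b) in
     if even m \<and> even m' then 1
     else if even m \<and> odd m' then 2
     else if odd m \<and> even m' then 3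
     else 4)"

end

theory Submission
  imports Defs "HOL-Library.Infinite_Set"
begin

lemma rep_exists:
  fixes a b h :: int
  assumes "a > 0" "b > 0" "gcd a b dvd h"
  shows "\<exists>\<alpha> \<beta>::nat. int \<alpha> * a - int \<beta> * b = h"
proof -
  obtain u v where uv: "u * a + v * b = gcd a b" using bezout_int by blast
  obtain m where m: "h = gcd a b * m" using assms(3) by (auto elim: dvdE)
  define X where "X = m * u"
  define Y where "Y = - m * v"
  define T where "T = \<bar>X\<bar> + \<bar>Y\<bar>"
  have e: "X * a - Y * b = h" unfolding X_def Y_def m uv[symmetric] by (simp add: algebra_simps)
  have T0: "T \<ge> 0" unfolding T_def by simp
  have "X + T * b \<ge> 0"
  proof -
    have "T * b \<ge> T" using T0 assms(2) by (simp add: mult_le_cancel_left1)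
    thus ?thesis unfolding T_def by linarith
  qed
  moreover have "Y + T * a \<ge> 0"
  proof -
    have "T * a \<ge> T" using T0 assms(1) by (simp add: mult_le_cancel_left1)
    thus ?thesis unfolding T_def by linarith
  qed
  moreover have "(X + T * b) * a - (Y + T * a) * b = h" using e by (simp add: algebra_simps)
  ultimately have "int (nat (X + T * b)) * a - int (nat (Y + T * a)) * b = h" by simp
  thus ?thesis by blast
qed

lemma rep_even:
  fixes a b h :: int
  assumes "a > 0" "b > 0" "gcd a b dvd h" "odd (a div gcd a b + b div gcd a b)"
  shows "\<exists>\<alpha> \<beta>::nat. int \<alpha> * a - int \<beta> * b = h \<and> even (\<alpha> + \<beta>) \<and> \<alpha> + \<beta> > 0"
proof -
  define d where "d = gcd a b"
  define a' where "a' = a div d"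
  define b' where "b' = b div d"
  have d0: "d > 0" using assms d_def by simp
  have ad: "a = d * a'" unfolding a'_def d_def by simp
  have bd: "b = d * b'" unfolding b'_def d_def by simp
  have a'0: "a' > 0" using ad d0 assms(1) by (simp add: zero_less_mult_iff)
  have b'0: "b' > 0" using bd d0 assms(2) by (simp add: zero_less_mult_iff)
  have cancel: "b' * a - a' * b = 0" using ad bd by simp
  obtain \<alpha> \<beta> :: nat where r: "int \<alpha> * a - int \<beta> * b = h" using rep_exists assms by blast
  have odd': "odd (a' + b')" using assms(4) unfolding a'_def b'_def d_def .
  show ?thesis
  proof (cases "even (\<alpha> + \<beta>)")
    case True
    define \<alpha>1 where "\<alpha>1 = \<alpha> + 2 * nat b'"
    define \<beta>1 where "\<beta>1 = \<beta> + 2 * nat a'"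
    have "int \<alpha>1 * a - int \<beta>1 * b = h" unfolding \<alpha>1_def \<beta>1_def using r cancel a'0 b'0
      by (simp add: algebra_simps)
    moreover have "even (\<alpha>1 + \<beta>1)" unfolding \<alpha>1_def \<beta>1_def using True by simp
    moreover have "\<alpha>1 + \<beta>1 > 0" unfolding \<alpha>1_def using b'0 by simp
    ultimately show ?thesis by blast
  next
    case False
    define \<alpha>1 where "\<alpha>1 = \<alpha> + nat b'"
    define \<beta>1 where "\<beta>1 = \<beta> + nat a'"
    have "int \<alpha>1 * a - int \<beta>1 * b = h" unfolding \<alpha>1_def \<beta>1_def using r cancel a'0 b'0
      by (simp add: algebra_simps)
    moreover have "even (\<alpha>1 + \<beta>1)"
    proof -
      have "odd (int (nat a' + nat b'))" using odd' a'0 b'0 by simp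
      hence "odd (nat a' + nat b')" by presburger
      hence "even ((\<alpha> + \<beta>) + (nat a' + nat b'))" using False by simp
      thus ?thesis unfolding \<alpha>1_def \<beta>1_def by (simp add: ac_simps)
    qed
    moreover have "\<alpha>1 + \<beta>1 > 0" unfolding \<alpha>1_def using b'0 by simp
    ultimately show ?thesis by blast
  qed
qed

lemma min_rep_odd:
  fixes a b s :: int
  assumes "a > 0" "b > 0" "s = gcd a b \<or> s = - gcd a b"
    and "odd (a div gcd a b)" "odd (b div gcd a b)"
  shows "odd (min_rep a b s)"
proof -
  define d where "d = gcd a b"
  define a' where "a' = a div d"
  define b' where "b' = b div d"
  have d0: "d > 0" using assms d_def by simp
  have ad: "a = d * a'" unfolding a'_def d_def by simp
  have bd: "b = d * b'" unfolding b'_def d_def by simp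
  have "gcd a b dvd s" using assms(3) by auto
  then obtain \<alpha>0 \<beta>0 :: nat where "int \<alpha>0 * a - int \<beta>0 * b = s" using rep_exists assms by blast
  hence ex: "\<exists>n. \<exists>\<alpha> \<beta>::nat. int \<alpha> * a - int \<beta> * b = s \<and> \<alpha> + \<beta> = n" by blast
  obtain \<alpha> \<beta> :: nat where r: "int \<alpha> * a - int \<beta> * b = s" and n: "\<alpha> + \<beta> = min_rep a b s"
    using LeastI_ex[OF ex] unfolding min_rep_def by blast
  have "d * (int \<alpha> * a' - int \<beta> * b') = int \<alpha> * a - int \<beta> * b"
    unfolding ad bd by (simp add: algebra_simps)
  also have "\<dots> = d * (if s = d then 1 else -1)"
    using r assms(3) unfolding d_def[symmetric] by auto
  finally have "d * (int \<alpha> * a' - int \<beta> * b') = d * (if s = d then 1 else -1)" .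
  hence e: "int \<alpha> * a' - int \<beta> * b' = (if s = d then 1 else -1)" using d0 by simp
  obtain p where p: "a' = 2 * p + 1" using assms(4) unfolding a'_def d_def by (auto elim: oddE)
  obtain q where q: "b' = 2 * q + 1" using assms(5) unfolding b'_def d_def by (auto elim: oddE)
  have "int \<alpha> + int \<beta> = (if s = d then 1 else -1) + 2 * (int \<beta> - int \<alpha> * p + int \<beta> * q)"
    using e unfolding p q by (simp add: algebra_simps)
  then obtain t where t: "int \<alpha> + int \<beta> = (if s = d then 1 else -1) + 2 * t" by blast
  have "odd (int \<alpha> + int \<beta>)"
  proof (cases "s = d")
    case True
    with t have "int \<alpha> + int \<beta> = 1 + 2 * t" by simp
    thus ?thesis by presburger
  next
    case False
    with t have "int \<alpha> + int \<beta> = -1 + 2 * t" by simp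
    thus ?thesis by presburger
  qed
  hence "odd (\<alpha> + \<beta>)" by presburger
  thus ?thesis using n by simp
qed

lemma case_odd:
  fixes a b :: int
  assumes "a > 0" "b > 0" "case_of a b \<in> {1, 2, 3}"
  shows "odd (a div gcd a b + b div gcd a b)"
proof (rule ccontr)
  assume "\<not> ?thesis"
  hence ev: "even (a div gcd a b + b div gcd a b)" by simp
  have cop: "coprime (a div gcd a b) (b div gcd a b)"
    using assms by (simp add: div_gcd_coprime)
  have "odd (a div gcd a b) \<and> odd (b div gcd a b)"
  proof (rule ccontr)
    assume "\<not> ?thesis"
    with ev have "2 dvd a div gcd a b" "2 dvd b div gcd a b" by auto
    with cop show False
      by (metis coprime_common_divisor odd_one)
  qed
  hence "odd (min_rep a b (gcd a b))" "odd (min_rep a b (- gcd a b))"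
    using min_rep_odd assms by auto
  hence "case_of a b = 4" unfolding case_of_def Let_def by simp
  thus False using assms(3) by simp
qed

lemma mono_deg_const:
  assumes "finite S" "\<And>i. i \<in> S \<Longrightarrow> w i = r"
  shows "mono_deg w S = int (card S) * r"
  unfolding mono_deg_def using assms by simp

lemma inf_inj:
  fixes A :: "nat set"
  assumes "infinite A"
  shows "\<exists>g::nat \<Rightarrow> nat. inj g \<and> (\<forall>n. g n \<in> A)"
  using inj_enumerate[OF assms] enumerate_in_set[OF assms] by blast

lemma mono_deg_union:
  assumes "finite S" "finite T" "S \<inter> T = {}"
  shows "mono_deg w (S \<union> T) = mono_deg w S + mono_deg w T"
  unfolding mono_deg_def using assms by (simp add: sum.union_disjoint)

lemma block_disj:
  fixes m n \<alpha> :: nat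
  assumes "m \<noteq> n"
  shows "{m*\<alpha>..<m*\<alpha>+\<alpha>} \<inter> {n*\<alpha>..<n*\<alpha>+\<alpha>} = {}"
proof (cases "m < n")
  case True
  hence "Suc m * \<alpha> \<le> n * \<alpha>" by (intro mult_le_mono1) simp
  thus ?thesis by auto
next
  case False
  hence "Suc n * \<alpha> \<le> m * \<alpha>" using assms by (intro mult_le_mono1) simp
  thus ?thesis by auto
qed

lemma img_block_disj:
  fixes g :: "nat \<Rightarrow> nat"
  assumes "inj g" "m \<noteq> n"
  shows "g ` {m*\<alpha>..<m*\<alpha>+\<alpha>} \<inter> g ` {n*\<alpha>..<n*\<alpha>+\<alpha>} = {}"
  using block_disj[OF assms(2)] assms(1) by (metis image_Int image_empty)

lemma four_disj:
  "P \<inter> P' = {} \<Longrightarrow> Q \<inter> Q' = {} \<Longrightarrow> P \<inter> Q' = {} \<Longrightarrow> P' \<inter> Q = {} \<Longrightarrow> (P \<union> Q) \<inter> (P' \<union> Q') = {}"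
  by blast

theorem proposition4p9:
  fixes a b c :: int and k :: enat and w :: "nat \<Rightarrow> int"
  assumes "a > 0" and "b > 0" and "- b < c" and "c < a"
    and "gcd (gcd a b) c = 1"
    and "gcd a b \<noteq> 1" and "gcd a c \<noteq> 1" and "gcd b c \<noteq> 1"
    and "enat (nat (gcd a b - 1)) \<le> k"
    and "case_of a b \<in> {1, 2, 3}"
    and "is_grading w [- b, c, a] [\<infinity>, k, \<infinity>]"
  shows "d_central w (gcd a b)"
proof -
  define d where "d = gcd a b"
  define A where "A = {i. w i = a}"
  define B where "B = {i. w i = - b}"
  define C where "C = {i. w i = c}"
  have d0: "d > 0" using assms(1) d_def by simp
  have g: "\<forall>j<3. ecard {i. w i = [- b, c, a] ! j} = [\<infinity>, k, \<infinity>] ! j"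
    using assms(11) unfolding is_grading_def by simp
  have eB: "ecard B = \<infinity>" using g[rule_format, of 0] unfolding B_def by simp
  have eC: "ecard C = k" using g[rule_format, of 1] unfolding C_def by simp
  have eA: "ecard A = \<infinity>" using g[rule_format, of 2] unfolding A_def by simp
  have infA: "infinite A" using eA unfolding ecard_def by (auto split: if_splits)
  have infB: "infinite B" using eB unfolding ecard_def by (auto split: if_splits)
  have AB: "A \<inter> B = {}" unfolding A_def B_def using assms(1,2) by auto
  have AC: "A \<inter> C = {}" unfolding A_def C_def using assms(4) by auto
  have BC: "B \<inter> C = {}" unfolding B_def C_def using assms(3) by auto
  obtain gA :: "nat \<Rightarrow> nat" where gA0: "inj gA \<and> (\<forall>n. gA n \<in> A)" using inf_inj[OF infA] by blast
  hence gA: "inj gA" "\<And>n. gA n \<in> A" by auto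
  obtain gB :: "nat \<Rightarrow> nat" where gB0: "inj gB \<and> (\<forall>n. gB n \<in> B)" using inf_inj[OF infB] by blast
  hence gB: "inj gB" "\<And>n. gB n \<in> B" by auto
  have Csub: "\<exists>T. T \<subseteq> C \<and> finite T \<and> card T = j" if "j \<le> nat (d - 1)" for j
  proof (cases "finite C")
    case True
    hence "enat (card C) = k" using eC unfolding ecard_def by simp
    hence "j \<le> card C" using assms(9) that unfolding d_def
      by (metis enat_ord_simps(1) order_trans)
    then obtain T where "T \<subseteq> C" "card T = j" using obtain_subset_with_card_n by metis
    thus ?thesis using True finite_subset by blast
  next
    case False
    then obtain T where "T \<subseteq> C" "finite T" "card T = j" using infinite_arbitrarily_large by blast
    thus ?thesis by blast
  qed
  have degA: "mono_deg w (gA ` I) = int (card I) * a" if "finite I" for I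
  proof -
    have "mono_deg w (gA ` I) = int (card (gA ` I)) * a"
      using that gA(2) by (intro mono_deg_const) (auto simp: A_def)
    thus ?thesis using card_image[OF inj_on_subset[OF gA(1)]] by simp
  qed
  have degB: "mono_deg w (gB ` I) = int (card I) * (- b)" if "finite I" for I
  proof -
    have "mono_deg w (gB ` I) = int (card (gB ` I)) * (- b)"
      using that gB(2) by (intro mono_deg_const) (auto simp: B_def)
    thus ?thesis using card_image[OF inj_on_subset[OF gB(1)]] by simp
  qed
  have ABimg: "gA ` I \<inter> gB ` J = {}" for I J
  proof -
    have "gA ` I \<subseteq> A" "gB ` J \<subseteq> B" using gA(2) gB(2) by auto
    thus ?thesis using AB by blast
  qed
  have part1: "\<exists>S. finite S \<and> mono_deg w S = r" for r
  proof -
    have "gcd c d = 1" using assms(5) unfolding d_def by (simp add: gcd.commute)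
    moreover obtain u v where "u * c + v * d = gcd c d" using bezout_int[of c d] by blast
    ultimately have uv: "u * c + v * d = 1" by simp
    define j where "j = (u * r) mod d"
    have j0: "0 \<le> j" "j < d" unfolding j_def using d0 by simp_all
    have "r - j * c = d * (r * v + (u * r div d) * c)"
    proof -
      have jeq: "j = u * r - d * (u * r div d)" unfolding j_def by (simp add: minus_div_mult_eq_mod[symmetric] algebra_simps)
      have "r - j * c = r * (1 - u * c) + d * (u * r div d) * c" unfolding jeq by (simp add: algebra_simps)
      also have "1 - u * c = v * d" using uv by simp
      finally show ?thesis by (simp add: algebra_simps)
    qed
    hence "gcd a b dvd r - j * c" unfolding d_def by simp
    then obtain \<alpha> \<beta> :: nat where r: "int \<alpha> * a - int \<beta> * b = r - j * c"
      using rep_exists assms(1,2) by blast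
    have "nat j \<le> nat (d - 1)" using j0 by simp
    then obtain T where T: "T \<subseteq> C" "finite T" "card T = nat j" using Csub by blast
    have degT: "mono_deg w T = j * c"
      using T j0 by (subst mono_deg_const[of T w c]) (auto simp: C_def)
    define S where "S = gA ` {0..<\<alpha>} \<union> gB ` {0..<\<beta>} \<union> T"
    have "mono_deg w S = mono_deg w (gA ` {0..<\<alpha>} \<union> gB ` {0..<\<beta>}) + mono_deg w T"
      unfolding S_def using T gA(2) gB(2) AC BC by (intro mono_deg_union) (auto, blast+)
    also have "mono_deg w (gA ` {0..<\<alpha>} \<union> gB ` {0..<\<beta>}) = int \<alpha> * a - int \<beta> * b"
      by (subst mono_deg_union) (auto simp: degA degB ABimg)
    finally have "mono_deg w S = r" using r degT by simp
    moreover have "finite S" unfolding S_def using T by simp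
    ultimately show ?thesis by blast
  qed
  have part2: "\<exists>F::nat set set. infinite F \<and> pairwise disjnt F \<and>
           (\<forall>S\<in>F. finite S \<and> even (card S) \<and> mono_deg w S = h)" if "d dvd h" for h
  proof -
    have od: "odd (a div gcd a b + b div gcd a b)" using case_odd assms(1,2,10) by blast
    have dh: "gcd a b dvd h" using that unfolding d_def .
    obtain \<alpha> \<beta> :: nat where r: "int \<alpha> * a - int \<beta> * b = h" "even (\<alpha> + \<beta>)" "\<alpha> + \<beta> > 0"
      using rep_even[OF assms(1,2) dh od] by blast
    define S where "S n = gA ` {n*\<alpha>..<n*\<alpha>+\<alpha>} \<union> gB ` {n*\<beta>..<n*\<beta>+\<beta>}" for n
    have cardS: "card (S n) = \<alpha> + \<beta>" for n
    proof -
      have "card (S n) = card (gA ` {n*\<alpha>..<n*\<alpha>+\<alpha>}) + card (gB ` {n*\<beta>..<n*\<beta>+\<beta>})"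
        unfolding S_def by (intro card_Un_disjoint) (auto simp: ABimg)
      thus ?thesis using card_image[OF inj_on_subset[OF gA(1)]] card_image[OF inj_on_subset[OF gB(1)]]
        by simp
    qed
    have degS: "mono_deg w (S n) = h" for n
      unfolding S_def using r(1) by (subst mono_deg_union) (auto simp: degA degB ABimg)
    have disj: "S m \<inter> S n = {}" if "m \<noteq> n" for m n
      unfolding S_def
      by (rule four_disj[OF img_block_disj[OF gA(1) that] img_block_disj[OF gB(1) that] ABimg ABimg])
    have ne: "S n \<noteq> {}" for n using cardS[of n] r(3) by (metis card.empty less_irrefl)
    have "inj S"
    proof (rule injI)
      fix m n assume "S m = S n"
      thus "m = n" using disj ne by (metis Int_absorb)
    qed
    hence "infinite (range S)" by (rule range_inj_infinite)
    moreover have "pairwise disjnt (range S)"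
    proof (unfold pairwise_def disjnt_def, intro ballI impI)
      fix X Y assume "X \<in> range S" "Y \<in> range S" "X \<noteq> Y"
      then obtain m n where mn: "X = S m" "Y = S n" by blast
      with \<open>X \<noteq> Y\<close> have "m \<noteq> n" by blast
      thus "X \<inter> Y = {}" using disj mn by simp
    qed
    moreover have "\<forall>X\<in>range S. finite X \<and> even (card X) \<and> mono_deg w X = h"
      using cardS degS r(2) by (auto simp: S_def)
    ultimately show ?thesis by blast
  qed
  show ?thesis unfolding d_central_def d_def[symmetric] using part1 part2 by blast
qed

end
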